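(* Let $2\le r\le n$, let $a_1,a_{r+1},\dots,a_n$ be distinct real numbers, and let $F(a)=(a-a_1)^r\hat F(a)$ with $\hat F(a)=\prod_{i=r+1}^n(a-a_i)$ ($\hat F=1$ if $r=n$). Fix signs $\epsilon_1,\epsilon_{r+1},\dots,\epsilon_n\in\{\pm1\}$, put $\Delta_i=\epsilon_i(a-a_i)$ and work on an open interval where these $\Delta_i$ are positive. Then the solution of $\mathrm{Op}_n[F]x=0$ is $$x=\sum_{k=1}^r\frac{\mu_k}{\Delta_1^{\,k-1/2}}+\sum_{i=r+1}^n\frac{\xi_i}{\sqrt{\Delta_i}},\qquad \mu_k,\xi_i\in\mathbb{R}.$$ Moreover, the general solution of $\mathrm{Op}_n[F]x=(n+\frac12)\nu_n a+\beta_n$ (with real constants $\nu_n,\beta_n$) is obtained, up to an additive constant, by adding to this $x$ the linear term $\frac{\nu_n}2a$.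
   Context: $D_a=d/da$, $F^{(m)}=D_a^mF$; Pochhammer $(z)_0=1$, $(z)_s=z(z+1)\cdots(z+s-1)$; $\mathrm{Op}_n[F]=\sum_{s=0}^n\frac{F^{(n-s)}}{(n-s)!}\frac{1}{(1/2)_s}D_a^s$. *)

theory Defs
  imports "HOL-Analysis.Analysis" "HOL-Computational_Algebra.Polynomial"
begin

definition Op :: "nat \<Rightarrow> real poly \<Rightarrow> (real \<Rightarrow> real) \<Rightarrow> real \<Rightarrow> real" where
  "Op n F x a = (\<Sum>s=0..n. poly ((pderiv ^^ (n - s)) F) a / fact (n - s)
                     * (1 / pochhammer (1/2) s) * (deriv ^^ s) x a)"

definition ndiff_on :: "nat \<Rightarrow> (real \<Rightarrow> real) \<Rightarrow> real set \<Rightarrow> bool" where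
  "ndiff_on n x I \<longleftrightarrow> (\<forall>k<n. \<forall>t\<in>I. (deriv ^^ k) x differentiable (at t))"

definition Fpoly :: "nat \<Rightarrow> nat \<Rightarrow> (nat \<Rightarrow> real) \<Rightarrow> real poly" where
  "Fpoly r n a = [:- a 1, 1:] ^ r * (\<Prod>i\<in>{r+1..n}. [:- a i, 1:])"

definition hom_sol :: "nat \<Rightarrow> nat \<Rightarrow> (nat \<Rightarrow> real) \<Rightarrow> (nat \<Rightarrow> real)
    \<Rightarrow> (nat \<Rightarrow> real) \<Rightarrow> (nat \<Rightarrow> real) \<Rightarrow> real \<Rightarrow> real" where
  "hom_sol r n a eps \<mu> \<xi> t =
     (\<Sum>k=1..r. \<mu> k / (eps 1 * (t - a 1)) powr (real k - 1/2))
     + (\<Sum>i=r+1..n. \<xi> i / sqrt (eps i * (t - a i)))"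

end

theory Submission
  imports Defs "Jordan_Normal_Form.Determinant"
begin


lemma deriv_cong_open:
  assumes "open S" "t \<in> S" "\<And>y. y \<in> S \<Longrightarrow> f y = g y"
  shows "deriv f t = deriv g t"
  by (rule deriv_cong_ev) (use assms in \<open>auto simp: eventually_nhds\<close>)

lemma iter_deriv_cong:
  assumes "open S" "\<And>y. y \<in> S \<Longrightarrow> f y = g y"
  shows "y \<in> S \<Longrightarrow> (deriv ^^ k) f y = (deriv ^^ k) g y"
proof (induction k arbitrary: y)
  case 0 thus ?case using assms by simp
next
  case (Suc k) thus ?case using deriv_cong_open[OF assms(1), of y "(deriv^^k) f" "(deriv^^k) g"] by simp
qed

definition fam :: "real set \<Rightarrow> (nat \<Rightarrow> real \<Rightarrow> real) \<Rightarrow> bool" where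
  "fam S f \<longleftrightarrow> (\<forall>k. \<forall>t\<in>S. (f k has_real_derivative f (Suc k) t) (at t))"

lemma fam_deriv:
  assumes "open S" "fam S f" "\<And>t. t \<in> S \<Longrightarrow> x t = f 0 t"
  shows "t \<in> S \<Longrightarrow> (deriv ^^ k) x t = f k t"
proof (induction k arbitrary: t)
  case 0 thus ?case using assms(3) by simp
next
  case (Suc k)
  have "(deriv ^^ Suc k) x t = deriv ((deriv ^^ k) x) t" by simp
  also have "\<dots> = deriv (f k) t" using deriv_cong_open[OF assms(1) Suc.prems] Suc.IH by blast
  also have "\<dots> = f (Suc k) t" using assms(2) Suc.prems unfolding fam_def by (simp add: DERIV_imp_deriv)
  finally show ?case .
qed

lemma fam_ndiff:
  assumes "open S" "fam S f" "\<And>t. t \<in> S \<Longrightarrow> x t = f 0 t"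
  shows "ndiff_on n x S"
  unfolding ndiff_on_def
proof (intro allI impI ballI)
  fix k t assume t: "t \<in> S"
  have "(f k has_real_derivative f (Suc k) t) (at t)" using assms(2) t unfolding fam_def by blast
  hence "((deriv ^^ k) x has_real_derivative f (Suc k) t) (at t)"
    by (rule has_field_derivative_transform_within_open[OF _ assms(1) t]) (simp add: fam_deriv[OF assms])
  thus "(deriv ^^ k) x differentiable at t" by (auto simp: real_differentiable_def)
qed

definition OpS :: "nat \<Rightarrow> real poly \<Rightarrow> (nat \<Rightarrow> real \<Rightarrow> real) \<Rightarrow> real \<Rightarrow> real" where
  "OpS n F f t = (\<Sum>s=0..n. poly ((pderiv ^^ (n - s)) F) t / fact (n - s) * (1 / pochhammer (1/2) s) * f s t)"

lemma Op_fam: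
  assumes "open S" "fam S f" "\<And>t. t \<in> S \<Longrightarrow> x t = f 0 t" "t \<in> S"
  shows "Op n F x t = OpS n F f t"
  unfolding Op_def OpS_def using fam_deriv[OF assms(1-3) assms(4)] by simp

lemma fam_add: "fam S f \<Longrightarrow> fam S g \<Longrightarrow> fam S (\<lambda>k t. f k t + g k t)"
  unfolding fam_def by (auto intro: DERIV_add)

lemma fam_cmult: "fam S f \<Longrightarrow> fam S (\<lambda>k t. c * f k t)"
  unfolding fam_def by (auto intro: DERIV_cmult)

lemma fam_sum: "finite A \<Longrightarrow> (\<And>i. i \<in> A \<Longrightarrow> fam S (f i)) \<Longrightarrow> fam S (\<lambda>k t. \<Sum>i\<in>A. f i k t)"
  unfolding fam_def by (auto intro!: DERIV_sum)

lemma fam_lin: "fam S (\<lambda>k t. if k = 0 then \<alpha> * t + c else if k = 1 then \<alpha> else 0)"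
  unfolding fam_def
proof (intro allI ballI)
  fix k t
  show "((\<lambda>t. if k = 0 then \<alpha> * t + c else if k = 1 then \<alpha> else 0) has_real_derivative
      (if Suc k = 0 then \<alpha> * t + c else if Suc k = 1 then \<alpha> else 0)) (at t)"
    by (cases "k = 0") (auto intro!: derivative_eq_intros)
qed

definition gf :: "real \<Rightarrow> real \<Rightarrow> real \<Rightarrow> nat \<Rightarrow> real \<Rightarrow> real" where
  "gf b e p k t = e ^ k * (\<Prod>j<k. (p - real j)) * (e * (t - b)) powr (p - real k)"

lemma powr_deriv_aux:
  fixes e b q t :: real
  assumes "e * (t - b) > 0"
  shows "((\<lambda>t. (e * (t - b)) powr q) has_real_derivative e * q * (e * (t - b)) powr (q - 1)) (at t)"
proof -
  have d: "((\<lambda>t. e * (t - b)) has_real_derivative e) (at t)"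
    by (auto intro!: derivative_eq_intros)
  have "((\<lambda>t. (e * (t - b)) powr ((\<lambda>_. q) t)) has_real_derivative
     ((e * (t - b)) powr q) * (0 * ln (e * (t - b)) + e * q / (e * (t - b)))) (at t)"
    by (rule DERIV_powr[OF d assms]) simp
  moreover have "((e * (t - b)) powr q) * (0 * ln (e * (t - b)) + e * q / (e * (t - b)))
     = e * q * (e * (t - b)) powr (q - 1)"
    using assms by (simp add: powr_diff)
  ultimately show ?thesis by simp
qed

lemma fam_gf:
  assumes "\<forall>t\<in>S. e * (t - b) > 0"
  shows "fam S (gf b e p)"
  unfolding fam_def
proof (intro allI ballI)
  fix k t assume t: "t \<in> S"
  have "((\<lambda>t. e ^ k * (\<Prod>j<k. (p - real j)) * (e * (t - b)) powr (p - real k)) has_real_derivative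
     e ^ k * (\<Prod>j<k. (p - real j)) * (e * (p - real k) * (e * (t - b)) powr (p - real k - 1))) (at t)"
    by (intro DERIV_cmult powr_deriv_aux) (use assms t in auto)
  moreover have "e ^ k * (\<Prod>j<k. (p - real j)) * (e * (p - real k) * (e * (t - b)) powr (p - real k - 1))
     = gf b e p (Suc k) t"
    unfolding gf_def by (simp add: algebra_simps)
  ultimately show "(gf b e p k has_real_derivative gf b e p (Suc k) t) (at t)"
    unfolding gf_def by simp
qed

lemma pderiv_iter_0: "(pderiv ^^ k) (0::real poly) = 0"
  by (induction k) auto

lemma degree_pderiv_iter: "degree ((pderiv ^^ k) (p::real poly)) = degree p - k"
  by (induction k arbitrary: p) (auto simp: funpow_Suc_right degree_pderiv simp del: funpow.simps)

lemma pderiv_iter_zero: "degree (p::real poly) < k \<Longrightarrow> (pderiv ^^ k) p = 0"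
proof (induction k arbitrary: p)
  case 0 thus ?case by simp
next
  case (Suc k)
  show ?case
  proof (cases "degree p = 0")
    case True
    hence "pderiv p = 0" by (simp add: pderiv_eq_0_iff)
    thus ?thesis by (simp add: funpow_Suc_right pderiv_iter_0 del: funpow.simps)
  next
    case False
    hence "degree (pderiv p) < k" using Suc.prems by (simp add: degree_pderiv)
    thus ?thesis using Suc.IH by (simp add: funpow_Suc_right del: funpow.simps)
  qed
qed

lemma poly_taylor:
  fixes G :: "real poly"
  assumes "degree G \<le> N"
  shows "poly G (t + h) = (\<Sum>i\<le>N. poly ((pderiv ^^ i) G) t / fact i * h ^ i)"
proof -
  define diff where "diff m x = poly ((pderiv ^^ m) G) (t + x)" for m x
  have D: "\<forall>m x. DERIV (diff m) x :> diff (Suc m) x"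
  proof (intro allI)
    fix m x
    have "DERIV (\<lambda>x. poly ((pderiv ^^ m) G) (t + x)) x :> poly (pderiv ((pderiv ^^ m) G)) (t + x) * 1"
      by (rule DERIV_chain2[where f="poly ((pderiv ^^ m) G)"]) (auto intro!: derivative_eq_intros)
    thus "DERIV (diff m) x :> diff (Suc m) x" unfolding diff_def by simp
  qed
  obtain s where s: "diff 0 h = (\<Sum>m<Suc N. diff m 0 / fact m * h ^ m) + diff (Suc N) s / fact (Suc N) * h ^ Suc N"
    using Maclaurin_all_le[of diff "diff 0" h "Suc N"] D by blast
  have "diff (Suc N) s = 0" unfolding diff_def using assms pderiv_iter_zero[of G "Suc N"] by simp
  with s show ?thesis unfolding diff_def by (simp add: lessThan_Suc_atMost)
qed



definition ff :: "nat \<Rightarrow> nat \<Rightarrow> real" where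
  "ff j m = (\<Prod>i<m. (real j - real i))"

lemma ff_zero: "j < m \<Longrightarrow> ff j m = 0"
  unfolding ff_def by (rule prod_zero) auto

lemma ff_0 [simp]: "ff j 0 = 1" unfolding ff_def by simp

lemma ff_Suc: "ff j (Suc m) = ff j m * (real j - real m)"
  unfolding ff_def by simp

lemma ff_fact: "ff (m + i) m = fact (m + i) / fact i"
proof (induction m)
  case 0 thus ?case by simp
next
  case (Suc m)
  have "ff (Suc m + i) (Suc m) = (real (Suc m + i) - real 0) * (\<Prod>l<m. (real (Suc m + i) - real (Suc l)))"
    unfolding ff_def by (rule prod.lessThan_Suc_shift)
  also have "(\<Prod>l<m. (real (Suc m + i) - real (Suc l))) = ff (m + i) m"
    unfolding ff_def by (intro prod.cong) auto
  finally have "ff (Suc m + i) (Suc m) = real (Suc m + i) * (fact (m + i) / fact i)" using Suc by simp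
  thus ?case by (simp add: algebra_simps)
qed

lemma K1:
  fixes F :: "real poly"
  assumes "degree F \<le> n"
  shows "(\<Sum>j=0..n. poly ((pderiv ^^ j) F) t / fact j * ff j m * h ^ j) = h ^ m * poly ((pderiv ^^ m) F) (t + h)"
proof (cases "n < m")
  case True
  hence "(pderiv ^^ m) F = 0" using assms by (intro pderiv_iter_zero) auto
  moreover have "(\<Sum>j=0..n. poly ((pderiv ^^ j) F) t / fact j * ff j m * h ^ j) = 0"
    using True by (intro sum.neutral) (auto simp: ff_zero)
  ultimately show ?thesis by simp
next
  case False
  define G where "G = (pderiv ^^ m) F"
  have dG: "degree G \<le> n - m" unfolding G_def using assms by (simp add: degree_pderiv_iter)
  have split: "{0..n} = {0..<m} \<union> {m..n}" using False by auto
  have "(\<Sum>j=0..n. poly ((pderiv ^^ j) F) t / fact j * ff j m * h ^ j)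
      = (\<Sum>j=m..n. poly ((pderiv ^^ j) F) t / fact j * ff j m * h ^ j)"
    unfolding split by (subst sum.union_disjoint) (auto simp: ff_zero)
  also have "\<dots> = (\<Sum>i=0..n-m. poly ((pderiv ^^ (m + i)) F) t / fact (m + i) * ff (m + i) m * h ^ (m + i))"
    using False by (intro sum.reindex_bij_witness[where j="\<lambda>j. j - m" and i="\<lambda>i. m + i"]) auto
  also have "\<dots> = (\<Sum>i=0..n-m. h ^ m * (poly ((pderiv ^^ i) G) t / fact i * h ^ i))"
  proof (intro sum.cong refl)
    fix i
    have "(pderiv ^^ (m + i)) F = (pderiv ^^ i) G" unfolding G_def by (simp add: funpow_add add.commute)
    thus "poly ((pderiv ^^ (m + i)) F) t / fact (m + i) * ff (m + i) m * h ^ (m + i)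
        = h ^ m * (poly ((pderiv ^^ i) G) t / fact i * h ^ i)"
      by (simp add: ff_fact power_add)
  qed
  also have "\<dots> = h ^ m * poly G (t + h)"
    using poly_taylor[OF dG, of t h] by (simp add: sum_distrib_left atLeast0AtMost)
  finally show ?thesis unfolding G_def .
qed

definition w :: "nat \<Rightarrow> nat \<Rightarrow> real" where
  "w k s = (-1) ^ s * (\<Prod>i<s. (1/2 - real k - real i)) / pochhammer (1/2) s"

lemma prod_shift_aux: "(\<Prod>i<s. (c - 1 - real i)) * c = (\<Prod>i<s. (c - real i)) * (c - real s)"
proof (induction s)
  case 0 thus ?case by simp
next
  case (Suc s)
  have "(\<Prod>i<Suc s. (c - 1 - real i)) * c = ((\<Prod>i<s. (c - 1 - real i)) * c) * (c - 1 - real s)"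
    by (simp only: prod.lessThan_Suc mult_ac)
  also have "\<dots> = (\<Prod>i<s. (c - real i)) * (c - real s) * (c - 1 - real s)" using Suc by simp
  also have "\<dots> = (\<Prod>i<Suc s. (c - real i)) * (c - real (Suc s))" by (simp add: algebra_simps)
  finally show ?case .
qed

lemma w_Suc: "w (Suc k) s = w k s * (1/2 - real k - real s) / (1/2 - real k)"
proof -
  have c: "1/2 - real k \<noteq> 0"
  proof
    assume "1/2 - real k = 0" hence "2 * real k = 1" by simp
    hence "2 * k = 1" by linarith
    thus False by presburger
  qed
  have "(\<Prod>i<s. (1/2 - real (Suc k) - real i)) = (\<Prod>i<s. ((1/2 - real k) - 1 - real i))"
    by (intro prod.cong) auto
  hence "(\<Prod>i<s. (1/2 - real (Suc k) - real i)) * (1/2 - real k)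
       = (\<Prod>i<s. (1/2 - real k - real i)) * (1/2 - real k - real s)"
    using prod_shift_aux[where s=s and c="1/2 - real k"] by simp
  hence P: "(\<Prod>i<s. (1/2 - real (Suc k) - real i))
       = (\<Prod>i<s. (1/2 - real k - real i)) * (1/2 - real k - real s) / (1/2 - real k)"
    using c by (simp add: field_simps)
  have "pochhammer (1/2::real) s > 0" by (rule pochhammer_pos) simp
  thus ?thesis unfolding w_def P using c by (simp add: field_simps)
qed

lemma w_1: "w (Suc 0) s = 1"
proof -
  have "(\<Prod>i<s. (1/2 - real (Suc 0) - real i)) = (\<Prod>i<s. (-1) * (1/2 + real i))"
    by (intro prod.cong) auto
  also have "\<dots> = (\<Prod>i<s. (-1::real)) * (\<Prod>i<s. (1/2 + real i))"
    by (rule prod.distrib)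
  also have "\<dots> = (-1) ^ s * pochhammer (1/2) s"
    by (simp add: pochhammer_prod atLeast0LessThan)
  finally have "(\<Prod>i<s. (1/2 - real (Suc 0) - real i)) = (-1) ^ s * pochhammer (1/2) s" .
  moreover have "pochhammer (1/2::real) s > 0" by (rule pochhammer_pos) simp
  ultimately show ?thesis unfolding w_def by (simp flip: power_mult_distrib)
qed

lemma w_rep:
  assumes "1 \<le> k"
  shows "\<exists>c. \<forall>j\<le>n. w k (n - j) = (\<Sum>m<k. c m * ff j m)"
  using assms
proof (induction k rule: nat_induct_at_least)
  case base
  show ?case by (rule exI[of _ "\<lambda>_. 1"]) (simp add: w_1)
next
  case (Suc k)
  then obtain c where c: "\<forall>j\<le>n. w k (n - j) = (\<Sum>m<k. c m * ff j m)" by blast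
  define A where "A = 1/2 - real k - real n"
  define B where "B = 1 / (1/2 - real k)"
  define c' where "c' m = B * ((if m < k then c m * (A + real m) else 0) + (if m = 0 then 0 else c (m - 1)))" for m
  show ?case
  proof (intro exI allI impI)
    fix j assume j: "j \<le> n"
    have "w (Suc k) (n - j) = w k (n - j) * (A + real j) * B"
      unfolding w_Suc A_def B_def using j by (simp add: of_nat_diff)
    also have "\<dots> = B * (\<Sum>m<k. c m * (ff j m * (A + real j)))"
      using c j by (simp add: sum_distrib_left sum_distrib_right algebra_simps)
    also have "(\<Sum>m<k. c m * (ff j m * (A + real j))) = (\<Sum>m<k. c m * (A + real m) * ff j m) + (\<Sum>m<k. c m * ff j (Suc m))"
      by (simp add: ff_Suc sum.distrib[symmetric] algebra_simps)
    also have "(\<Sum>m<k. c m * (A + real m) * ff j m) = (\<Sum>m<Suc k. (if m < k then c m * (A + real m) else 0) * ff j m)"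
      by simp
    also have "(\<Sum>m<k. c m * ff j (Suc m)) = (\<Sum>m<Suc k. (if m = 0 then 0 else c (m - 1)) * ff j m)"
      by (subst sum.lessThan_Suc_shift) simp
    finally show "w (Suc k) (n - j) = (\<Sum>m<Suc k. c' m * ff j m)"
      unfolding c'_def by (simp add: sum.distrib[symmetric] sum_distrib_left algebra_simps)
  qed
qed



lemma B0:
  assumes e: "e = 1 \<or> e = -1" and pos: "e * (t - b) > 0"
  shows "OpS n F (gf b e (1/2 - real k)) t = (e * (t - b)) powr (1/2 - real k) / (b - t) ^ n *
     (\<Sum>j=0..n. poly ((pderiv ^^ j) F) t / fact j * w k (n - j) * (b - t) ^ j)"
proof -
  define D where "D = e * (t - b)"
  define h where "h = b - t"
  define p where "p = 1/2 - real k"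
  have h0: "h \<noteq> 0" using pos e unfolding h_def by auto
  have D0: "D > 0" using pos unfolding D_def .
  have es: "e ^ s / D ^ s = (-1) ^ s / h ^ s" for s
  proof (cases "e = 1")
    case True
    have "h ^ s = (-1) ^ s * (t - b) ^ s" unfolding h_def
      by (metis minus_diff_eq power_minus)
    thus ?thesis using True h0 unfolding D_def by (simp add: field_simps)
  next
    case False
    hence "e = -1" using e by simp
    thus ?thesis unfolding D_def h_def by (simp add: power_divide[symmetric])
  qed
  have trm: "poly ((pderiv ^^ (n - s)) F) t / fact (n - s) * (1 / pochhammer (1/2) s) * gf b e p s t
      = D powr p * (poly ((pderiv ^^ (n - s)) F) t / fact (n - s) * w k s / h ^ s)" for s
  proof -
    have "gf b e p s t = D powr p * (\<Prod>j<s. (p - real j)) * (e ^ s / D ^ s)"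
      unfolding gf_def D_def[symmetric] using D0 by (simp add: powr_diff powr_realpow)
    thus ?thesis unfolding es w_def p_def by (simp add: field_simps)
  qed
  have "OpS n F (gf b e p) t = D powr p * (\<Sum>s=0..n. poly ((pderiv ^^ (n - s)) F) t / fact (n - s) * w k s / h ^ s)"
    unfolding OpS_def trm by (simp add: sum_distrib_left)
  also have "(\<Sum>s=0..n. poly ((pderiv ^^ (n - s)) F) t / fact (n - s) * w k s / h ^ s)
      = (\<Sum>j=0..n. poly ((pderiv ^^ (n - (n + 0 - j))) F) t / fact (n - (n + 0 - j)) * w k (n + 0 - j) / h ^ (n + 0 - j))"
    by (rule sum.atLeastAtMost_rev)
  also have "\<dots> = (\<Sum>j=0..n. poly ((pderiv ^^ j) F) t / fact j * w k (n - j) * h ^ j) / h ^ n"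
    unfolding sum_divide_distrib
  proof (intro sum.cong refl)
    fix j assume "j \<in> {0..n}"
    hence j: "j \<le> n" by simp
    have "h ^ n = h ^ (n - j) * h ^ j" using j by (simp flip: power_add)
    thus "poly ((pderiv ^^ (n - (n + 0 - j))) F) t / fact (n - (n + 0 - j)) * w k (n + 0 - j) / h ^ (n + 0 - j)
        = poly ((pderiv ^^ j) F) t / fact j * w k (n - j) * h ^ j / h ^ n"
      using j h0 by (simp add: field_simps)
  qed
  finally show ?thesis unfolding D_def h_def p_def by simp
qed

lemma BV:
  assumes dF: "degree F \<le> n" and k: "1 \<le> k"
    and e: "e = 1 \<or> e = -1" and pos: "e * (t - b) > 0"
    and roots: "\<forall>m<k. poly ((pderiv ^^ m) F) b = 0"
  shows "OpS n F (gf b e (1/2 - real k)) t = 0"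
proof -
  obtain c where c: "\<forall>j\<le>n. w k (n - j) = (\<Sum>m<k. c m * ff j m)" using w_rep[OF k] by blast
  have "(\<Sum>j=0..n. poly ((pderiv ^^ j) F) t / fact j * w k (n - j) * (b - t) ^ j)
      = (\<Sum>j=0..n. \<Sum>m<k. c m * (poly ((pderiv ^^ j) F) t / fact j * ff j m * (b - t) ^ j))"
    by (intro sum.cong refl) (use c in \<open>auto simp: sum_distrib_left sum_distrib_right algebra_simps\<close>)
  also have "\<dots> = (\<Sum>m<k. c m * (\<Sum>j=0..n. poly ((pderiv ^^ j) F) t / fact j * ff j m * (b - t) ^ j))"
    by (subst sum.swap) (simp add: sum_distrib_left)
  also have "\<dots> = (\<Sum>m<k. c m * ((b - t) ^ m * poly ((pderiv ^^ m) F) (t + (b - t))))"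
    unfolding K1[OF dF] by simp
  also have "\<dots> = 0" using roots by simp
  finally show ?thesis unfolding B0[OF e pos] by simp
qed

lemma B1:
  assumes dF: "degree F \<le> n"
    and e: "e = 1 \<or> e = -1" and pos: "e * (t - b) > 0"
  shows "OpS n F (gf b e (1/2 - real (Suc 0))) t = (e * (t - b)) powr (1/2 - real (Suc 0)) / (b - t) ^ n * poly F b"
proof -
  have "(\<Sum>j=0..n. poly ((pderiv ^^ j) F) t / fact j * w (Suc 0) (n - j) * (b - t) ^ j)
      = (\<Sum>j=0..n. poly ((pderiv ^^ j) F) t / fact j * ff j 0 * (b - t) ^ j)"
    by (simp add: w_1)
  also have "\<dots> = poly F b" unfolding K1[OF dF] by simp
  finally show ?thesis unfolding B0[OF e pos] by simp
qed



lemma gronwall0: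
  fixes E E' :: "real \<Rightarrow> real"
  assumes ab: "a \<le> b"
    and d: "\<forall>t\<in>{a..b}. (E has_real_derivative E' t) (at t)"
    and bd: "\<forall>t\<in>{a..b}. \<bar>E' t\<bar> \<le> C * E t"
    and nn: "\<forall>t\<in>{a..b}. E t \<ge> 0"
    and z: "E a = 0 \<or> E b = 0"
  shows "\<forall>t\<in>{a..b}. E t = 0"
proof
  fix t assume t: "t \<in> {a..b}"
  show "E t = 0"
  proof (cases "E a = 0")
    case True
    define G where "G x = E x * exp (- C * x)" for x
    have "G a \<ge> G t"
    proof (rule DERIV_nonpos_imp_nonincreasing[of a t G])
      show "a \<le> t" using t by simp
      fix x assume x: "a \<le> x" "x \<le> t"
      hence xab: "x \<in> {a..b}" using t by auto
      have "(G has_real_derivative E' x * exp (- C * x) + E x * (exp (- C * x) * (- C))) (at x)"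
        unfolding G_def using d xab by (auto intro!: derivative_eq_intros)
      moreover have "E' x * exp (- C * x) + E x * (exp (- C * x) * (- C)) = (E' x - C * E x) * exp (- C * x)"
        by (simp add: algebra_simps)
      moreover have "\<bar>E' x\<bar> \<le> C * E x" using bd xab by blast
      hence "E' x - C * E x \<le> 0" by (simp add: abs_le_iff)
      hence "(E' x - C * E x) * exp (- C * x) \<le> 0" by (simp add: mult_nonpos_nonneg)
      ultimately show "\<exists>y. (G has_real_derivative y) (at x) \<and> y \<le> 0" by auto
    qed
    hence "E t * exp (- C * t) \<le> 0" using True unfolding G_def by simp
    hence "E t \<le> 0" by (simp add: mult_le_0_iff)
    thus ?thesis using nn t by force
  next
    case False
    hence Eb: "E b = 0" using z by simp
    define H where "H x = E x * exp (C * x)" for x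
    have "H t \<le> H b"
    proof (rule DERIV_nonneg_imp_nondecreasing[of t b H])
      show "t \<le> b" using t by simp
      fix x assume x: "t \<le> x" "x \<le> b"
      hence xab: "x \<in> {a..b}" using t by auto
      have "(H has_real_derivative E' x * exp (C * x) + E x * (exp (C * x) * C)) (at x)"
        unfolding H_def using d xab by (auto intro!: derivative_eq_intros)
      moreover have "E' x * exp (C * x) + E x * (exp (C * x) * C) = (E' x + C * E x) * exp (C * x)"
        by (simp add: algebra_simps)
      moreover have "\<bar>E' x\<bar> \<le> C * E x" using bd xab by blast
      hence "E' x + C * E x \<ge> 0" by (simp add: abs_le_iff)
      hence "(E' x + C * E x) * exp (C * x) \<ge> 0" by simp
      ultimately show "\<exists>y. (H has_real_derivative y) (at x) \<and> y \<ge> 0" by auto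
    qed
    hence "E t * exp (C * t) \<le> 0" using Eb unfolding H_def by simp
    hence "E t \<le> 0" by (simp add: mult_le_0_iff)
    thus ?thesis using nn t by force
  qed
qed

lemma abs_prod_le: "(a::real)\<^sup>2 \<le> E \<Longrightarrow> b\<^sup>2 \<le> E \<Longrightarrow> \<bar>a * b\<bar> \<le> E"
proof -
  assume h: "a\<^sup>2 \<le> E" "b\<^sup>2 \<le> E"
  have "0 \<le> (\<bar>a\<bar> - \<bar>b\<bar>)\<^sup>2" by simp
  hence "2 * \<bar>a * b\<bar> \<le> a\<^sup>2 + b\<^sup>2" by (simp add: power2_eq_square abs_mult algebra_simps)
  thus ?thesis using h by simp
qed



lemma uniq:
  fixes y :: "real \<Rightarrow> real" and q :: "nat \<Rightarrow> real \<Rightarrow> real"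
  assumes I: "open I" "is_interval I" and t0: "t0 \<in> I" and n: "1 \<le> n"
    and nd: "ndiff_on n y I"
    and cont: "\<forall>s\<le>n. continuous_on I (q s)"
    and qn: "\<forall>t\<in>I. q n t \<noteq> 0"
    and ode: "\<forall>t\<in>I. (\<Sum>s=0..n. q s t * (deriv ^^ s) y t) = 0"
    and init: "\<forall>k<n. (deriv ^^ k) y t0 = 0"
  shows "\<forall>t\<in>I. y t = 0"
proof
  fix t1 assume t1: "t1 \<in> I"
  define a where "a = min t0 t1"
  define b where "b = max t0 t1"
  have ab: "a \<le> b" unfolding a_def b_def by simp
  have aI: "a \<in> I" unfolding a_def using t0 t1 by (simp add: min_def)
  have bI: "b \<in> I" unfolding b_def using t0 t1 by (simp add: max_def)
  have JI: "{a..b} \<subseteq> I"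
  proof
    fix x assume "x \<in> {a..b}"
    thus "x \<in> I" using I(2) aI bI unfolding is_interval_1 by (meson atLeastAtMost_iff)
  qed
  define Y where "Y k t = (deriv ^^ k) y t" for k t
  define E where "E t = (\<Sum>k<n. (Y k t)\<^sup>2)" for t
  define E' where "E' t = (\<Sum>k<n. 2 * (Y k t * Y (Suc k) t))" for t
  have dY: "(Y k has_real_derivative Y (Suc k) t) (at t)" if "k < n" "t \<in> I" for k t
  proof -
    have "(deriv ^^ k) y differentiable at t" using nd that unfolding ndiff_on_def by blast
    hence "((deriv ^^ k) y has_real_derivative deriv ((deriv ^^ k) y) t) (at t)"
      by (simp add: DERIV_deriv_iff_real_differentiable)
    thus ?thesis unfolding Y_def by simp
  qed
  have dE: "(E has_real_derivative E' t) (at t)" if "t \<in> I" for t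
  proof -
    have "((\<lambda>t. \<Sum>k<n. Y k t * Y k t) has_real_derivative (\<Sum>k<n. Y k t * Y (Suc k) t + Y (Suc k) t * Y k t)) (at t)"
    proof (rule DERIV_sum)
      fix k assume "k \<in> {..<n}"
      hence d: "(Y k has_real_derivative Y (Suc k) t) (at t)" using dY that by simp
      show "((\<lambda>t. Y k t * Y k t) has_real_derivative Y k t * Y (Suc k) t + Y (Suc k) t * Y k t) (at t)"
        by (rule DERIV_mult'[OF d d])
    qed
    thus ?thesis unfolding E_def E'_def by (simp add: power2_eq_square algebra_simps)
  qed
  define Q where "Q t = (\<Sum>s<n. \<bar>q s t / q n t\<bar>)" for t
  have "continuous_on {a..b} Q"
  proof -
    have cJ: "\<And>s. s \<le> n \<Longrightarrow> continuous_on {a..b} (q s)" using cont JI continuous_on_subset by blast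
    show ?thesis unfolding Q_def
    proof (rule continuous_on_sum, rule continuous_on_rabs, rule continuous_on_divide)
      fix s assume "s \<in> {..<n}"
      thus "continuous_on {a..b} (q s)" using cJ by simp
      show "continuous_on {a..b} (q n)" using cJ by simp
      show "\<forall>x\<in>{a..b}. q n x \<noteq> 0" using qn JI by auto
    qed
  qed
  hence "compact (Q ` {a..b})" by (rule compact_continuous_image) simp
  hence "bounded (Q ` {a..b})" by (rule compact_imp_bounded)
  then obtain M where M: "\<forall>x\<in>Q ` {a..b}. norm x \<le> M" unfolding bounded_iff by blast
  have "Q a \<in> Q ` {a..b}" using ab by simp
  hence "norm (Q a) \<le> M" using M by blast
  hence M0: "M \<ge> 0" using norm_ge_zero[of "Q a"] by linarith
  have Ynk: "(Y k t)\<^sup>2 \<le> E t" if "k < n" for k t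
    unfolding E_def by (rule member_le_sum) (use that in auto)
  have bd: "\<bar>E' t\<bar> \<le> (2 * real n * (1 + M)) * E t" if t: "t \<in> {a..b}" for t
  proof -
    have tI: "t \<in> I" using t JI by auto
    have Enn: "E t \<ge> 0" unfolding E_def by (simp add: sum_nonneg)
    have each: "\<bar>Y k t * Y (Suc k) t\<bar> \<le> (1 + M) * E t" if k: "k < n" for k
    proof (cases "Suc k < n")
      case True
      have "\<bar>Y k t * Y (Suc k) t\<bar> \<le> E t" by (rule abs_prod_le) (use Ynk k True in auto)
      moreover have "E t \<ge> 0" unfolding E_def by (simp add: sum_nonneg)
      moreover have "E t \<le> (1 + M) * E t" using M0 \<open>E t \<ge> 0\<close> by (simp add: algebra_simps)
      ultimately show ?thesis by linarith
    next
      case False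
      hence kn: "Suc k = n" using k by simp
      have "(\<Sum>s=0..n. q s t * Y s t) = 0" using ode tI unfolding Y_def by simp
      hence "(\<Sum>s<n. q s t * Y s t) + q n t * Y n t = 0"
        by (simp add: atLeast0AtMost lessThan_Suc_atMost[symmetric])
      hence "q n t * Y n t = - (\<Sum>s<n. q s t * Y s t)" by linarith
      hence "Y n t = - (\<Sum>s<n. q s t * Y s t) / q n t" using qn tI by (simp add: field_simps)
      hence Yn: "Y n t = - (\<Sum>s<n. q s t / q n t * Y s t)" by (simp add: sum_divide_distrib)
      have "Y k t * Y n t = - (\<Sum>s<n. q s t / q n t * (Y s t * Y k t))"
        unfolding Yn by (simp add: sum_distrib_left algebra_simps)
      hence "\<bar>Y k t * Y n t\<bar> = \<bar>\<Sum>s<n. q s t / q n t * (Y s t * Y k t)\<bar>" by simp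
      also have "\<dots> \<le> (\<Sum>s<n. \<bar>q s t / q n t\<bar> * \<bar>Y s t * Y k t\<bar>)"
        by (rule order.trans[OF sum_abs]) (simp add: abs_mult)
      also have "\<dots> \<le> (\<Sum>s<n. \<bar>q s t / q n t\<bar> * E t)"
      proof (rule sum_mono)
        fix s assume "s \<in> {..<n}"
        hence "\<bar>Y s t * Y k t\<bar> \<le> E t" using k by (intro abs_prod_le Ynk) auto
        thus "\<bar>q s t / q n t\<bar> * \<bar>Y s t * Y k t\<bar> \<le> \<bar>q s t / q n t\<bar> * E t" by (rule mult_left_mono) simp
      qed
      also have "\<dots> = Q t * E t" unfolding Q_def by (simp add: sum_distrib_right)
      also have "\<dots> \<le> M * E t"
      proof (rule mult_right_mono)
        have "Q t \<in> Q ` {a..b}" using t by simp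
        hence "norm (Q t) \<le> M" using M by blast
        thus "Q t \<le> M" by simp
        show "0 \<le> E t" by (simp add: E_def sum_nonneg)
      qed
      also have "\<dots> \<le> (1 + M) * E t" using Enn by (simp add: algebra_simps)
      finally show ?thesis using kn by simp
    qed
    have "\<bar>E' t\<bar> \<le> (\<Sum>k<n. \<bar>2 * (Y k t * Y (Suc k) t)\<bar>)" unfolding E'_def by (rule sum_abs)
    also have "\<dots> \<le> (\<Sum>k<n. 2 * ((1 + M) * E t))"
      by (intro sum_mono) (use each in \<open>auto simp: abs_mult\<close>)
    also have "\<dots> = (2 * real n * (1 + M)) * E t" by simp
    finally show ?thesis .
  qed
  have E0: "E t0 = 0" unfolding E_def Y_def using init by simp
  have "\<forall>t\<in>{a..b}. E t = 0"
  proof (rule gronwall0[OF ab])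
    show "\<forall>t\<in>{a..b}. (E has_real_derivative E' t) (at t)" using dE JI by auto
    show "\<forall>t\<in>{a..b}. \<bar>E' t\<bar> \<le> 2 * real n * (1 + M) * E t" using bd by auto
    show "\<forall>t\<in>{a..b}. 0 \<le> E t" unfolding E_def by (simp add: sum_nonneg)
    show "E a = 0 \<or> E b = 0" using E0 unfolding a_def b_def by (auto simp: min_def max_def)
  qed
  moreover have "t1 \<in> {a..b}" unfolding a_def b_def by simp
  ultimately have "E t1 = 0" by blast
  moreover have "(Y 0 t1)\<^sup>2 \<le> E t1" using Ynk n by simp
  ultimately show "y t1 = 0" unfolding Y_def by simp
qed



lemma ndiff_cong:
  assumes "open S" "\<And>t. t \<in> S \<Longrightarrow> x t = y t" "ndiff_on n x S"
  shows "ndiff_on n y S"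
  unfolding ndiff_on_def
proof (intro allI impI ballI)
  fix k t assume k: "k < n" and t: "t \<in> S"
  have "(deriv ^^ k) x differentiable at t" using assms(3) k t unfolding ndiff_on_def by blast
  hence "((deriv ^^ k) x has_real_derivative deriv ((deriv ^^ k) x) t) (at t)"
    by (simp add: DERIV_deriv_iff_real_differentiable)
  hence "((deriv ^^ k) y has_real_derivative deriv ((deriv ^^ k) x) t) (at t)"
    by (rule has_field_derivative_transform_within_open[OF _ assms(1) t])
       (rule iter_deriv_cong[OF assms(1)], use assms(2) in auto)
  thus "(deriv ^^ k) y differentiable at t" by (auto simp: real_differentiable_def)
qed

lemma Op_cong:
  assumes "open S" "\<And>t. t \<in> S \<Longrightarrow> x t = y t" "t \<in> S"
  shows "Op n F x t = Op n F y t"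
  unfolding Op_def using iter_deriv_cong[OF assms(1), of x y t] assms by simp

lemma ndiff_sub_eq:
  assumes S: "open S" and nx: "ndiff_on n x S" and ny: "ndiff_on n y S"
  shows "k \<le> n \<Longrightarrow> t \<in> S \<Longrightarrow> (deriv ^^ k) (\<lambda>t. x t - y t) t = (deriv ^^ k) x t - (deriv ^^ k) y t"
proof (induction k arbitrary: t)
  case 0 thus ?case by simp
next
  case (Suc k)
  have k: "k < n" using Suc.prems by simp
  have "(deriv ^^ Suc k) (\<lambda>t. x t - y t) t = deriv ((deriv ^^ k) (\<lambda>t. x t - y t)) t" by simp
  also have "\<dots> = deriv (\<lambda>t. (deriv ^^ k) x t - (deriv ^^ k) y t) t"
    by (rule deriv_cong_open[OF S Suc.prems(2)]) (use Suc.IH Suc.prems in auto)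
  also have "\<dots> = deriv ((deriv ^^ k) x) t - deriv ((deriv ^^ k) y) t"
  proof -
    have "(deriv ^^ k) x differentiable at t" "(deriv ^^ k) y differentiable at t"
      using nx ny k Suc.prems unfolding ndiff_on_def by blast+
    hence "((deriv ^^ k) x has_real_derivative deriv ((deriv ^^ k) x) t) (at t)"
      "((deriv ^^ k) y has_real_derivative deriv ((deriv ^^ k) y) t) (at t)"
      by (simp_all add: DERIV_deriv_iff_real_differentiable)
    hence "((\<lambda>t. (deriv ^^ k) x t - (deriv ^^ k) y t) has_real_derivative
        deriv ((deriv ^^ k) x) t - deriv ((deriv ^^ k) y) t) (at t)"
      by (rule DERIV_diff)
    thus ?thesis by (rule DERIV_imp_deriv)
  qed
  finally show ?case by simp
qed

lemma ndiff_sub: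
  assumes S: "open S" and nx: "ndiff_on n x S" and ny: "ndiff_on n y S"
  shows "ndiff_on n (\<lambda>t. x t - y t) S"
  unfolding ndiff_on_def
proof (intro allI impI ballI)
  fix k t assume k: "k < n" and t: "t \<in> S"
  have "(deriv ^^ k) x differentiable at t" "(deriv ^^ k) y differentiable at t"
    using nx ny k t unfolding ndiff_on_def by blast+
  hence "((deriv ^^ k) x has_real_derivative deriv ((deriv ^^ k) x) t) (at t)"
    "((deriv ^^ k) y has_real_derivative deriv ((deriv ^^ k) y) t) (at t)"
    by (simp_all add: DERIV_deriv_iff_real_differentiable)
  hence "((\<lambda>t. (deriv ^^ k) x t - (deriv ^^ k) y t) has_real_derivative
      deriv ((deriv ^^ k) x) t - deriv ((deriv ^^ k) y) t) (at t)"
    by (rule DERIV_diff)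
  hence "((deriv ^^ k) (\<lambda>t. x t - y t) has_real_derivative
      deriv ((deriv ^^ k) x) t - deriv ((deriv ^^ k) y) t) (at t)"
    by (rule has_field_derivative_transform_within_open[OF _ S t])
       (use ndiff_sub_eq[OF S nx ny] k in auto)
  thus "(deriv ^^ k) (\<lambda>t. x t - y t) differentiable at t" by (auto simp: real_differentiable_def)
qed

lemma Op_sub:
  assumes S: "open S" and nx: "ndiff_on n x S" and ny: "ndiff_on n y S" and t: "t \<in> S"
  shows "Op n F (\<lambda>t. x t - y t) t = Op n F x t - Op n F y t"
proof -
  have "Op n F (\<lambda>t. x t - y t) t = (\<Sum>s=0..n. poly ((pderiv ^^ (n - s)) F) t / fact (n - s) * (1 / pochhammer (1/2) s)
       * ((deriv ^^ s) x t - (deriv ^^ s) y t))"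
    unfolding Op_def by (intro sum.cong refl) (use ndiff_sub_eq[OF S nx ny _ t] in simp)
  also have "\<dots> = Op n F x t - Op n F y t"
    unfolding Op_def right_diff_distrib sum_subtractf ..
  finally show ?thesis .
qed

lemma OpS_add: "OpS n F (\<lambda>k t. f k t + g k t) t = OpS n F f t + OpS n F g t"
  unfolding OpS_def sum.distrib[symmetric] by (intro sum.cong refl) (simp add: distrib_left)

lemma OpS_sum: "OpS n F (\<lambda>k t. \<Sum>i\<in>A. c i * f i k t) t = (\<Sum>i\<in>A. c i * OpS n F (f i) t)"
  unfolding OpS_def sum_distrib_left by (subst sum.swap) (auto intro!: sum.cong simp: mult_ac)

lemma iter_deriv_zero: "(deriv ^^ k) (\<lambda>_. 0::real) = (\<lambda>_. 0)"
  by (induction k) auto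

lemma Op_zero_fun:
  assumes "open S" "\<And>t. t \<in> S \<Longrightarrow> x t = 0" "t \<in> S"
  shows "Op n F x t = 0"
proof -
  have "Op n F x t = Op n F (\<lambda>_. 0) t" by (rule Op_cong[OF assms(1) _ assms(3)]) (use assms(2) in auto)
  thus ?thesis unfolding Op_def iter_deriv_zero by simp
qed



lemma dvd_pderiv_step:
  fixes P :: "real poly"
  assumes "[:-b, 1:] ^ Suc j dvd P"
  shows "[:-b, 1:] ^ j dvd pderiv P"
proof -
  obtain R where P: "P = [:-b, 1:] ^ Suc j * R" using assms by (auto elim: dvdE)
  have "pderiv P = [:-b, 1:] ^ Suc j * pderiv R + R * (Polynomial.smult (of_nat (Suc j)) ([:-b, 1:] ^ j) * pderiv [:-b, 1:])"
    unfolding P pderiv_mult pderiv_power_Suc by simp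
  also have "\<dots> = [:-b, 1:] ^ j * ([:-b, 1:] * pderiv R + R * Polynomial.smult (of_nat (Suc j)) 1 * pderiv [:-b, 1:])"
    by (simp add: algebra_simps)
  finally show ?thesis by simp
qed

lemma root_pderiv_iter:
  fixes P :: "real poly"
  shows "[:-b, 1:] ^ k dvd P \<Longrightarrow> m < k \<Longrightarrow> poly ((pderiv ^^ m) P) b = 0"
proof (induction m arbitrary: P k)
  case 0
  then obtain k' where k: "k = Suc k'" by (cases k) auto
  have "[:-b, 1:] dvd P" using 0(1) unfolding k by (metis dvd_mult_left power_Suc)
  thus ?case by (simp add: poly_eq_0_iff_dvd)
next
  case (Suc m)
  then obtain k' where k: "k = Suc k'" by (cases k) auto
  have "[:-b, 1:] ^ k' dvd pderiv P" using dvd_pderiv_step Suc.prems(1) unfolding k by blast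
  moreover have "m < k'" using Suc.prems k by simp
  ultimately have "poly ((pderiv ^^ m) (pderiv P)) b = 0" by (rule Suc.IH)
  thus ?case by (simp add: funpow_Suc_right del: funpow.simps)
qed

lemma lin_poly_facts: "[:-c, 1:] \<noteq> (0::real poly)" "degree [:-c, 1:] = 1" "lead_coeff [:-c, 1::real:] = 1"
  by auto

lemma monic_shape:
  fixes a :: "nat \<Rightarrow> real"
  assumes "finite A"
  shows "degree ([:-c, 1:] ^ k * (\<Prod>i\<in>A. [:-a i, 1:])) = k + card A"
    and "lead_coeff ([:-c, 1:] ^ k * (\<Prod>i\<in>A. [:-a i, 1:])) = 1"
proof -
  have p0: "(\<Prod>i\<in>A. [:-a i, 1:]) \<noteq> 0" using assms by (auto simp: prod_zero_iff)
  have dp: "degree (\<Prod>i\<in>A. [:-a i, 1:]) = card A"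
    by (subst degree_prod_eq_sum_degree) auto
  have q0: "[:-c, 1:] ^ k \<noteq> 0" by simp
  show "degree ([:-c, 1:] ^ k * (\<Prod>i\<in>A. [:-a i, 1:])) = k + card A"
    using degree_mult_eq[OF q0 p0] dp by (simp add: degree_power_eq)
  show "lead_coeff ([:-c, 1:] ^ k * (\<Prod>i\<in>A. [:-a i, 1:])) = 1"
    by (simp add: lead_coeff_mult lead_coeff_power lead_coeff_prod)
qed

lemma coeff_pderiv_iter: "coeff ((pderiv ^^ k) (p::real poly)) i = pochhammer (of_nat (Suc i)) k * coeff p (i + k)"
proof (induction k arbitrary: p)
  case 0 thus ?case by simp
next
  case (Suc k)
  have "coeff ((pderiv ^^ Suc k) p) i = coeff ((pderiv ^^ k) (pderiv p)) i"
    by (simp add: funpow_Suc_right del: funpow.simps)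
  also have "\<dots> = pochhammer (of_nat (Suc i)) k * (of_nat (Suc (i + k)) * coeff p (Suc (i + k)))"
    using Suc.IH by (simp add: coeff_pderiv)
  also have "\<dots> = pochhammer (of_nat (Suc i)) (Suc k) * coeff p (i + Suc k)"
    by (simp add: pochhammer_Suc algebra_simps)
  finally show ?case .
qed

lemma poch2: "pochhammer (2::real) k = fact (Suc k)"
  by (induction k) (simp_all add: pochhammer_Suc algebra_simps)

lemma poly_deg1: "degree (q::real poly) \<le> 1 \<Longrightarrow> poly q t = coeff q 0 + coeff q 1 * t"
proof -
  assume d: "degree q \<le> 1"
  have "poly q t = (\<Sum>i\<le>degree q. coeff q i * t ^ i)" by (rule poly_altdef)
  also have "\<dots> = (\<Sum>i\<le>1. coeff q i * t ^ i)"
    by (rule sum.mono_neutral_left) (use d in \<open>auto simp: coeff_eq_0\<close>)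
  finally show ?thesis by simp
qed

lemma top_derivs:
  fixes F :: "real poly"
  assumes dF: "degree F = n" and n: "1 \<le> n"
  shows "poly ((pderiv ^^ n) F) t = fact n * coeff F n"
    and "poly ((pderiv ^^ (n - 1)) F) t = fact (n - 1) * coeff F (n - 1) + fact n * coeff F n * t"
proof -
  have dn: "degree ((pderiv ^^ n) F) \<le> 1" using dF by (simp add: degree_pderiv_iter)
  have "coeff F (Suc n) = 0" using dF by (simp add: coeff_eq_0)
  thus "poly ((pderiv ^^ n) F) t = fact n * coeff F n"
    by (simp add: poly_deg1[OF dn] coeff_pderiv_iter pochhammer_fact[symmetric] poch2)
  have dn1: "degree ((pderiv ^^ (n - 1)) F) \<le> 1" using dF by (simp add: degree_pderiv_iter)
  have e1: "Suc (n - 1) = n" "1 + (n - 1) = n" using n by auto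
  have c0: "coeff ((pderiv ^^ (n - 1)) F) 0 = fact (n - 1) * coeff F (n - 1)"
    by (simp add: coeff_pderiv_iter pochhammer_fact[symmetric])
  have "coeff ((pderiv ^^ (n - 1)) F) 1 = pochhammer (of_nat (Suc 1)) (n - 1) * coeff F (1 + (n - 1))"
    by (rule coeff_pderiv_iter)
  also have "\<dots> = fact n * coeff F n" unfolding e1(2) using poch2[of "n - 1"] e1(1) by simp
  finally have c1: "coeff ((pderiv ^^ (n - 1)) F) 1 = fact n * coeff F n" .
  show "poly ((pderiv ^^ (n - 1)) F) t = fact (n - 1) * coeff F (n - 1) + fact n * coeff F n * t"
    using poly_deg1[OF dn1, of t] c0 c1 by simp
qed



locale prop_setup =
  fixes r n :: nat and a eps :: "nat \<Rightarrow> real" and I :: "real set"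
  assumes r2: "2 \<le> r" and rn: "r \<le> n" and inj: "inj_on a ({1} \<union> {r+1..n})"
    and epsv: "\<forall>i\<in>{1} \<union> {r+1..n}. eps i = 1 \<or> eps i = -1"
    and opI: "open I" and intI: "is_interval I" and neI: "I \<noteq> {}"
    and posI: "\<forall>t\<in>I. \<forall>i\<in>{1} \<union> {r+1..n}. eps i * (t - a i) > 0"
begin

definition F where "F = Fpoly r n a"

definition phi :: "nat \<Rightarrow> nat \<Rightarrow> real \<Rightarrow> real" where
  "phi p = (if p \<le> r then gf (a 1) (eps 1) (1/2 - real p) else gf (a p) (eps p) (1/2 - real (Suc 0)))"

definition Hf :: "(nat \<Rightarrow> real) \<Rightarrow> nat \<Rightarrow> real \<Rightarrow> real" where
  "Hf v k t = (\<Sum>p\<in>{1..n}. v p * phi p k t)"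

lemma e1: "eps 1 = 1 \<or> eps 1 = -1" using epsv by simp
lemma ei: "i \<in> {r+1..n} \<Longrightarrow> eps i = 1 \<or> eps i = -1" using epsv by simp
lemma pos1: "t \<in> I \<Longrightarrow> eps 1 * (t - a 1) > 0" using posI by simp
lemma posi: "t \<in> I \<Longrightarrow> i \<in> {r+1..n} \<Longrightarrow> eps i * (t - a i) > 0" using posI by simp

lemma fam_phi: "fam I (phi p)" if "p \<in> {1..n}"
proof (cases "p \<le> r")
  case True thus ?thesis unfolding phi_def using pos1 by (simp add: fam_gf)
next
  case False
  hence "p \<in> {r+1..n}" using that by auto
  thus ?thesis unfolding phi_def using False posi by (simp add: fam_gf)
qed

lemma fam_Hf: "fam I (Hf v)"
proof -
  have "fam I (\<lambda>k t. \<Sum>p\<in>{1..n}. v p * phi p k t)"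
    by (intro fam_sum fam_cmult fam_phi) auto
  thus ?thesis unfolding Hf_def[abs_def] .
qed

lemma F_shape: "degree F = n" "coeff F n = 1"
proof -
  have "degree F = r + card {r+1..n}" "lead_coeff F = 1"
    unfolding F_def Fpoly_def using monic_shape[of "{r+1..n}" "a 1" r a] by auto
  moreover have "card {r+1..n} = n - r" by simp
  ultimately show "degree F = n" "coeff F n = 1" using rn by auto
qed

lemma F_roots1: "m < r \<Longrightarrow> poly ((pderiv ^^ m) F) (a 1) = 0"
  by (rule root_pderiv_iter[of "a 1" r]) (auto simp: F_def Fpoly_def)

lemma F_rootsi: "i \<in> {r+1..n} \<Longrightarrow> poly F (a i) = 0"
  unfolding F_def Fpoly_def by (auto simp: poly_prod prod_zero_iff)

lemma F_nz: "t \<in> I \<Longrightarrow> poly F t \<noteq> 0"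
proof -
  assume t: "t \<in> I"
  have "t - a 1 \<noteq> 0" using pos1[OF t] by auto
  moreover have "\<forall>i\<in>{r+1..n}. t - a i \<noteq> 0" using posi[OF t] by fastforce
  ultimately show ?thesis unfolding F_def Fpoly_def by (auto simp: poly_prod prod_zero_iff)
qed

lemma OpS_phi_F: "p \<in> {1..n} \<Longrightarrow> t \<in> I \<Longrightarrow> OpS n F (phi p) t = 0"
proof -
  assume p: "p \<in> {1..n}" and t: "t \<in> I"
  have dF: "degree F \<le> n" using F_shape by simp
  show ?thesis
  proof (cases "p \<le> r")
    case True
    have "OpS n F (gf (a 1) (eps 1) (1/2 - real p)) t = 0"
      by (rule BV[OF dF _ e1 pos1[OF t]]) (use p True F_roots1 in auto)
    thus ?thesis unfolding phi_def using True by simp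
  next
    case False
    hence pi: "p \<in> {r+1..n}" using p by auto
    have "OpS n F (gf (a p) (eps p) (1/2 - real (Suc 0))) t = 0"
      by (rule BV[OF dF _ ei[OF pi] posi[OF t pi]]) (use F_rootsi[OF pi] in auto)
    thus ?thesis unfolding phi_def using False by simp
  qed
qed

lemma Op_Hf: "t \<in> I \<Longrightarrow> (\<And>s. s \<in> I \<Longrightarrow> x s = Hf v 0 s) \<Longrightarrow> Op n F x t = 0"
proof -
  assume t: "t \<in> I" and x: "\<And>s. s \<in> I \<Longrightarrow> x s = Hf v 0 s"
  have "Op n F x t = OpS n F (Hf v) t" by (rule Op_fam[OF opI fam_Hf x t])
  also have "\<dots> = (\<Sum>p\<in>{1..n}. v p * OpS n F (phi p) t)"
    unfolding Hf_def[abs_def] by (rule OpS_sum)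
  also have "\<dots> = 0" using OpS_phi_F t by simp
  finally show ?thesis .
qed

end


lemma gf_0: "gf b e q 0 t = (e * (t - b)) powr q" unfolding gf_def by simp

lemma powr_neg_aux: "(D::real) > 0 \<Longrightarrow> D powr (1/2 - q) = 1 / D powr (q - 1/2)"
proof -
  assume D: "D > 0"
  have "D powr (1/2 - q) * D powr (q - 1/2) = 1" using D by (simp flip: powr_add)
  thus ?thesis using D by (simp add: field_simps)
qed

context prop_setup begin

lemma split_1n: "{1..n} = {1..r} \<union> {r+1..n}" using rn by auto

lemma hom_Hf: "t \<in> I \<Longrightarrow> hom_sol r n a eps \<mu> \<xi> t = Hf (\<lambda>p. if p \<le> r then \<mu> p else \<xi> p) 0 t"
proof -
  assume t: "t \<in> I"
  let ?w = "\<lambda>p. if p \<le> r then \<mu> p else \<xi> p"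
  have "Hf ?w 0 t = (\<Sum>p\<in>{1..r}. ?w p * phi p 0 t) + (\<Sum>p\<in>{r+1..n}. ?w p * phi p 0 t)"
    unfolding Hf_def split_1n by (rule sum.union_disjoint) auto
  also have "(\<Sum>p\<in>{1..r}. ?w p * phi p 0 t) = (\<Sum>k=1..r. \<mu> k / (eps 1 * (t - a 1)) powr (real k - 1/2))"
  proof (intro sum.cong refl)
    fix k assume "k \<in> {1..r}"
    thus "?w k * phi k 0 t = \<mu> k / (eps 1 * (t - a 1)) powr (real k - 1/2)"
      using powr_neg_aux[OF pos1[OF t], of "real k"] by (simp add: phi_def gf_0)
  qed
  also have "(\<Sum>p\<in>{r+1..n}. ?w p * phi p 0 t) = (\<Sum>i=r+1..n. \<xi> i / sqrt (eps i * (t - a i)))"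
  proof (intro sum.cong refl)
    fix i assume i: "i \<in> {r+1..n}"
    have D: "eps i * (t - a i) > 0" using posi[OF t i] .
    have "(eps i * (t - a i)) powr (1/2 - real (Suc 0)) = 1 / sqrt (eps i * (t - a i))"
      using powr_neg_aux[OF D, of 1] D by (simp add: powr_half_sqrt)
    thus "?w i * phi i 0 t = \<xi> i / sqrt (eps i * (t - a i))"
      using i by (simp add: phi_def gf_0)
  qed
  finally show ?thesis unfolding hom_sol_def by simp
qed

lemma n1: "1 \<le> n" using r2 rn by simp

lemma uniq_F:
  assumes nd: "ndiff_on n y I" and ode: "\<forall>t\<in>I. Op n F y t = 0" and t0: "t0 \<in> I"
    and init: "\<forall>k<n. (deriv ^^ k) y t0 = 0"
  shows "\<forall>t\<in>I. y t = 0"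
proof (rule uniq[OF opI intI t0 n1 nd _ _ _ init])
  let ?q = "\<lambda>s t. poly ((pderiv ^^ (n - s)) F) t / fact (n - s) * (1 / pochhammer (1/2) s)"
  have "pochhammer (1/2::real) s \<noteq> 0" for s using pochhammer_pos[of "1/2::real" s] by simp
  thus "\<forall>s\<le>n. continuous_on I (?q s)" by (auto intro!: continuous_intros)
  show "\<forall>t\<in>I. ?q n t \<noteq> 0"
  proof
    fix t assume "t \<in> I"
    moreover have "pochhammer (1/2::real) n > 0" by (rule pochhammer_pos) simp
    ultimately show "?q n t \<noteq> 0" using F_nz by simp
  qed
  show "\<forall>t\<in>I. (\<Sum>s = 0..n. ?q s t * (deriv ^^ s) y t) = 0" using ode unfolding Op_def by simp
qed

lemma I_infinite: "infinite I"
proof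
  assume fin: "finite I"
  obtain t where t: "t \<in> I" using neI by auto
  obtain e where e: "e > 0" "ball t e \<subseteq> I" using opI t by (meson openE)
  have "{t..t + e/2} \<subseteq> ball t e" using e(1) by (auto simp: dist_real_def)
  hence "{t..t + e/2} \<subseteq> I" using e(2) by auto
  hence "finite {t..t + e/2}" using fin finite_subset by blast
  thus False using e(1) infinite_Icc[of t "t + e/2"] by simp
qed

end


context prop_setup begin

lemma indep:
  assumes z: "\<forall>t\<in>I. Hf v 0 t = 0"
  shows "\<forall>p\<in>{1..n}. v p = 0"
proof -
  obtain t where t: "t \<in> I" using neI by auto
  have xi: "v j = 0" if j: "j \<in> {r+1..n}" for j
  proof -
    define G where "G = [:-a 1, 1:] ^ Suc r * (\<Prod>i\<in>{r+1..n}-{j}. [:-a i, 1:])"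
    have "degree G = Suc r + card ({r+1..n}-{j})"
      unfolding G_def by (rule monic_shape(1)) simp
    moreover have "card ({r+1..n}-{j}) = n - r - 1" using j by simp
    ultimately have dG: "degree G \<le> n" using j by auto
    have G1: "poly ((pderiv ^^ m) G) (a 1) = 0" if "m < Suc r" for m
      by (rule root_pderiv_iter[of "a 1" "Suc r"]) (use that in \<open>auto simp: G_def\<close>)
    have Gi: "poly G (a i) = 0" if "i \<in> {r+1..n}" "i \<noteq> j" for i
      unfolding G_def using that by (auto simp: poly_prod prod_zero_iff)
    have j1: "a j \<noteq> a 1"
    proof
      assume "a j = a 1"
      hence "j = 1" using inj j unfolding inj_on_def by auto
      thus False using j r2 by auto
    qed
    have Gj: "poly G (a j) \<noteq> 0"
    proof -
      have "\<forall>i\<in>{r+1..n}-{j}. a j - a i \<noteq> 0"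
      proof
        fix i assume i: "i \<in> {r+1..n}-{j}"
        show "a j - a i \<noteq> 0"
        proof
          assume "a j - a i = 0"
          hence "j = i" using inj j i unfolding inj_on_def by auto
          thus False using i by auto
        qed
      qed
      thus ?thesis unfolding G_def using j1 by (auto simp: poly_prod prod_zero_iff)
    qed
    have "Op n G (Hf v 0) t = 0" by (rule Op_zero_fun[OF opI _ t]) (use z in auto)
    moreover have "Op n G (Hf v 0) t = OpS n G (Hf v) t" by (rule Op_fam[OF opI fam_Hf _ t]) simp
    moreover have "OpS n G (Hf v) t = (\<Sum>p\<in>{1..n}. v p * OpS n G (phi p) t)"
      unfolding Hf_def[abs_def] by (rule OpS_sum)
    moreover have "(\<Sum>p\<in>{1..n}. v p * OpS n G (phi p) t) = v j * OpS n G (phi j) t"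
    proof -
      have jn: "j \<in> {1..n}" using j by auto
      have "\<forall>p\<in>{1..n}-{j}. OpS n G (phi p) t = 0"
      proof
        fix p assume p: "p \<in> {1..n}-{j}"
        show "OpS n G (phi p) t = 0"
        proof (cases "p \<le> r")
          case True
          have "OpS n G (gf (a 1) (eps 1) (1/2 - real p)) t = 0"
            by (rule BV[OF dG _ e1 pos1[OF t]]) (use p True G1 in auto)
          thus ?thesis unfolding phi_def using True by simp
        next
          case False
          hence pi: "p \<in> {r+1..n}" using p by auto
          have "OpS n G (gf (a p) (eps p) (1/2 - real (Suc 0))) t = 0"
            by (rule BV[OF dG _ ei[OF pi] posi[OF t pi]]) (use Gi[OF pi] p in auto)
          thus ?thesis unfolding phi_def using False by simp
        qed
      qed
      thus ?thesis using sum.remove[OF _ jn, of "\<lambda>p. v p * OpS n G (phi p) t"] by simp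
    qed
    moreover have "OpS n G (phi j) t \<noteq> 0"
    proof -
      have jr: "\<not> j \<le> r" using j by auto
      have D: "eps j * (t - a j) > 0" using posi[OF t j] .
      have "OpS n G (phi j) t = (eps j * (t - a j)) powr (1/2 - real (Suc 0)) / (a j - t) ^ n * poly G (a j)"
        unfolding phi_def using jr B1[OF dG ei[OF j] D] by simp
      moreover have "a j - t \<noteq> 0" using D by auto
      ultimately show ?thesis using D Gj ei[OF j] by auto
    qed
    ultimately show "v j = 0" by simp
  qed
  have mu: "v p = 0" if p: "p \<in> {1..r}" for p
  proof -
    define D where "D t = eps 1 * (t - a 1)" for t
    define P where "P = (\<Sum>q\<in>{1..r}. monom (v q) (r - q))"
    have root: "poly P (D t) = 0" if t: "t \<in> I" for t
    proof -
      have Dp: "D t > 0" unfolding D_def using pos1[OF t] .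
      have "Hf v 0 t = (\<Sum>q\<in>{1..r}. v q * phi q 0 t) + (\<Sum>q\<in>{r+1..n}. v q * phi q 0 t)"
        unfolding Hf_def split_1n by (rule sum.union_disjoint) auto
      also have "(\<Sum>q\<in>{r+1..n}. v q * phi q 0 t) = 0" using xi by simp
      also have "(\<Sum>q\<in>{1..r}. v q * phi q 0 t) = (\<Sum>q\<in>{1..r}. v q * D t powr (1/2 - real q))"
        by (intro sum.cong refl) (auto simp: phi_def gf_0 D_def)
      finally have s0: "(\<Sum>q\<in>{1..r}. v q * D t powr (1/2 - real q)) = 0" using z t by simp
      have "poly P (D t) = (\<Sum>q\<in>{1..r}. v q * D t ^ (r - q))"
        unfolding P_def by (simp add: poly_sum poly_monom)
      also have "\<dots> = (\<Sum>q\<in>{1..r}. v q * D t powr (1/2 - real q)) * D t powr (real r - 1/2)"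
        unfolding sum_distrib_right
      proof (intro sum.cong refl)
        fix q assume q: "q \<in> {1..r}"
        have "D t powr (1/2 - real q) * D t powr (real r - 1/2) = D t powr (real (r - q))"
          using q by (simp add: powr_add[symmetric] of_nat_diff)
        also have "\<dots> = D t ^ (r - q)" using Dp by (simp add: powr_realpow)
        finally show "v q * D t ^ (r - q) = v q * D t powr (1/2 - real q) * D t powr (real r - 1/2)"
          by simp
      qed
      also have "\<dots> = 0" using s0 by simp
      finally show ?thesis .
    qed
    have "inj_on D I" unfolding D_def inj_on_def using e1 by auto
    hence "infinite (D ` I)" using I_infinite finite_imageD by blast
    moreover have "D ` I \<subseteq> {x. poly P x = 0}" using root by auto
    ultimately have "P = 0" using poly_roots_finite finite_subset by blast
    hence "coeff P (r - p) = 0" by simp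
    moreover have "coeff P (r - p) = v p"
    proof -
      have "coeff P (r - p) = (\<Sum>q\<in>{1..r}. if r - q = r - p then v q else 0)"
        unfolding P_def coeff_sum coeff_monom by simp
      also have "\<dots> = (\<Sum>q\<in>{1..r}. if q = p then v q else 0)"
        by (intro sum.cong refl) (use p in auto)
      also have "\<dots> = v p" using p by simp
      finally show ?thesis .
    qed
    ultimately show "v p = 0" by simp
  qed
  show ?thesis using xi mu split_1n by auto
qed

end


context prop_setup begin

lemma span:
  assumes nd: "ndiff_on n x I" and ode: "\<forall>t\<in>I. Op n F x t = 0"
  shows "\<exists>v. \<forall>t\<in>I. x t = Hf v 0 t"
proof -
  obtain t0 where t0: "t0 \<in> I" using neI by auto
  define A :: "real mat" where "A = Matrix.mat n n (\<lambda>(i, j). phi (Suc j) i t0)"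
  have A: "A \<in> carrier_mat n n" unfolding A_def by simp
  define vf :: "real vec \<Rightarrow> nat \<Rightarrow> real" where "vf w p = w $ (p - 1)" for w p
  have Av: "(A *\<^sub>v w) $ k = Hf (vf w) k t0" if k: "k < n" and w: "w \<in> carrier_vec n" for k w
  proof -
    have "(A *\<^sub>v w) $ k = (\<Sum>j\<in>{0..<n}. phi (Suc j) k t0 * w $ j)"
      using k w unfolding A_def by (simp add: scalar_prod_def)
    also have "\<dots> = (\<Sum>p\<in>{1..n}. w $ (p - 1) * phi p k t0)"
      by (rule sum.reindex_bij_witness[where i="\<lambda>p. p - 1" and j="Suc"]) auto
    finally show ?thesis unfolding Hf_def vf_def .
  qed
  have hom: "\<forall>t\<in>I. Hf v 0 t = 0" if init: "\<forall>k<n. Hf v k t0 = 0" for v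
  proof (rule uniq_F[OF _ _ t0])
    show "ndiff_on n (Hf v 0) I" by (rule fam_ndiff[OF opI fam_Hf]) simp
    show "\<forall>t\<in>I. Op n F (Hf v 0) t = 0" using Op_Hf by blast
    show "\<forall>k<n. (deriv ^^ k) (Hf v 0) t0 = 0"
      using fam_deriv[OF opI fam_Hf, where x="Hf v 0" and t=t0] t0 init by simp
  qed
  have detA: "Determinant.det A \<noteq> 0"
  proof
    assume "Determinant.det A = 0"
    then obtain w where w: "w \<in> carrier_vec n" "w \<noteq> 0\<^sub>v n" "A *\<^sub>v w = 0\<^sub>v n"
      using det_0_iff_vec_prod_zero[OF A] by blast
    have "\<forall>k<n. Hf (vf w) k t0 = 0"
    proof (intro allI impI)
      fix k assume k: "k < n"
      have "Hf (vf w) k t0 = (A *\<^sub>v w) $ k" using Av[OF k w(1)] by simp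
      thus "Hf (vf w) k t0 = 0" using w(3) k by simp
    qed
    hence "\<forall>t\<in>I. Hf (vf w) 0 t = 0" by (rule hom)
    hence z: "\<forall>p\<in>{1..n}. vf w p = 0" by (rule indep)
    have "w = 0\<^sub>v n"
    proof (rule eq_vecI)
      fix i assume "i < dim_vec (0\<^sub>v n :: real vec)"
      hence i: "i < n" by simp
      have "vf w (Suc i) = 0" using z i by simp
      thus "w $ i = (0\<^sub>v n :: real vec) $ i" using i unfolding vf_def by simp
    next
      show "dim_vec w = dim_vec (0\<^sub>v n :: real vec)" using w(1) by simp
    qed
    thus False using w(2) by simp
  qed
  obtain B where B: "B \<in> carrier_mat n n" "A * B = 1\<^sub>m n"
    using det_non_zero_imp_unit[OF A detA] unfolding Units_def ring_mat_def by auto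
  define d where "d = Matrix.vec n (\<lambda>k. (deriv ^^ k) x t0)"
  define w where "w = B *\<^sub>v d"
  have dc: "d \<in> carrier_vec n" unfolding d_def by simp
  have wc: "w \<in> carrier_vec n" unfolding w_def using B(1) dc by simp
  have Aw: "A *\<^sub>v w = d"
    unfolding w_def using assoc_mult_mat_vec[OF A B(1) dc, symmetric] B(2) dc by simp
  let ?h = "Hf (vf w) 0"
  have nh: "ndiff_on n ?h I" by (rule fam_ndiff[OF opI fam_Hf]) simp
  have "\<forall>t\<in>I. x t - ?h t = 0"
  proof (rule uniq_F[OF _ _ t0])
    show "ndiff_on n (\<lambda>t. x t - ?h t) I" by (rule ndiff_sub[OF opI nd nh])
    show "\<forall>t\<in>I. Op n F (\<lambda>t. x t - ?h t) t = 0"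
      using Op_sub[OF opI nd nh] ode Op_Hf by simp
    show "\<forall>k<n. (deriv ^^ k) (\<lambda>t. x t - ?h t) t0 = 0"
    proof (intro allI impI)
      fix k assume k: "k < n"
      have "(deriv ^^ k) (\<lambda>t. x t - ?h t) t0 = (deriv ^^ k) x t0 - (deriv ^^ k) ?h t0"
        using ndiff_sub_eq[OF opI nd nh _ t0] k by simp
      also have "(deriv ^^ k) ?h t0 = Hf (vf w) k t0"
        using fam_deriv[OF opI fam_Hf, where x="?h" and t=t0 and k=k] t0 by simp
      also have "\<dots> = d $ k" using Av[OF k wc] Aw by simp
      also have "d $ k = (deriv ^^ k) x t0" unfolding d_def using k by simp
      finally show "(deriv ^^ k) (\<lambda>t. x t - ?h t) t0 = 0" by simp
    qed
  qed
  thus ?thesis by auto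
qed

end


context prop_setup begin

lemma part1: "(ndiff_on n x I \<and> (\<forall>t\<in>I. Op n F x t = 0)) \<longleftrightarrow> (\<exists>\<mu> \<xi>. \<forall>t\<in>I. x t = hom_sol r n a eps \<mu> \<xi> t)"
proof
  assume h: "ndiff_on n x I \<and> (\<forall>t\<in>I. Op n F x t = 0)"
  then obtain v where v: "\<forall>t\<in>I. x t = Hf v 0 t" using span by blast
  have "\<forall>t\<in>I. x t = hom_sol r n a eps v v t" using v hom_Hf[of _ v v] by simp
  thus "\<exists>\<mu> \<xi>. \<forall>t\<in>I. x t = hom_sol r n a eps \<mu> \<xi> t" by blast
next
  assume "\<exists>\<mu> \<xi>. \<forall>t\<in>I. x t = hom_sol r n a eps \<mu> \<xi> t"
  then obtain \<mu> \<xi> where h: "\<forall>t\<in>I. x t = hom_sol r n a eps \<mu> \<xi> t" by blast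
  let ?w = "\<lambda>p. if p \<le> r then \<mu> p else \<xi> p"
  have x: "\<And>t. t \<in> I \<Longrightarrow> x t = Hf ?w 0 t" using h hom_Hf by simp
  show "ndiff_on n x I \<and> (\<forall>t\<in>I. Op n F x t = 0)"
    using fam_ndiff[OF opI fam_Hf x] Op_Hf[OF _ x] by blast
qed

definition Lf :: "real \<Rightarrow> real \<Rightarrow> nat \<Rightarrow> real \<Rightarrow> real" where
  "Lf \<nu> c k t = (if k = 0 then \<nu> / 2 * t + c else if k = 1 then \<nu> / 2 else 0)"

lemma fam_Lf: "fam I (Lf \<nu> c)"
  unfolding Lf_def[abs_def] using fam_lin[of I "\<nu>/2" c] by simp

lemma OpS_Lf: "OpS n F (Lf \<nu> c) t = (real n + 1/2) * \<nu> * t + c + \<nu> * coeff F (n - 1)"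
proof -
  define g where "g s = poly ((pderiv ^^ (n - s)) F) t / fact (n - s) * (1 / pochhammer (1/2) s) * Lf \<nu> c s t" for s
  have "OpS n F (Lf \<nu> c) t = (\<Sum>s=0..n. g s)" unfolding OpS_def g_def ..
  also have "\<dots> = (\<Sum>s\<in>{0..1}. g s)"
    by (rule sum.mono_neutral_right) (use n1 in \<open>auto simp: g_def Lf_def\<close>)
  also have "\<dots> = g 0 + g 1" by simp
  also have "g 0 = \<nu> / 2 * t + c"
    unfolding g_def Lf_def using top_derivs(1)[OF F_shape(1) n1, of t] F_shape(2) by simp
  also have "g 1 = (coeff F (n - 1) + real n * t) * \<nu>"
  proof -
    have "poly ((pderiv ^^ (n - 1)) F) t / fact (n - 1) = coeff F (n - 1) + real n * t"
      using top_derivs(2)[OF F_shape(1) n1, of t] F_shape(2) n1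
      by (simp add: field_simps fact_reduce[of n])
    thus ?thesis unfolding g_def Lf_def by simp
  qed
  finally show ?thesis by (simp add: algebra_simps)
qed

lemma part2: "\<exists>c. \<forall>x. (ndiff_on n x I \<and> (\<forall>t\<in>I. Op n F x t = (real n + 1/2) * \<nu> * t + \<beta>))
            \<longleftrightarrow> (\<exists>\<mu> \<xi>. \<forall>t\<in>I. x t = hom_sol r n a eps \<mu> \<xi> t + \<nu> / 2 * t + c)"
proof (intro exI allI)
  define c where "c = \<beta> - \<nu> * coeff F (n - 1)"
  fix x
  have nL: "ndiff_on n (Lf \<nu> c 0) I" by (rule fam_ndiff[OF opI fam_Lf]) simp
  have OL: "Op n F (Lf \<nu> c 0) t = (real n + 1/2) * \<nu> * t + \<beta>" if "t \<in> I" for t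
    using Op_fam[OF opI fam_Lf _ that, of "Lf \<nu> c 0"] OpS_Lf unfolding c_def by simp
  show "(ndiff_on n x I \<and> (\<forall>t\<in>I. Op n F x t = (real n + 1/2) * \<nu> * t + \<beta>))
            \<longleftrightarrow> (\<exists>\<mu> \<xi>. \<forall>t\<in>I. x t = hom_sol r n a eps \<mu> \<xi> t + \<nu> / 2 * t + c)"
  proof
    assume h: "ndiff_on n x I \<and> (\<forall>t\<in>I. Op n F x t = (real n + 1/2) * \<nu> * t + \<beta>)"
    have ny: "ndiff_on n (\<lambda>t. x t - Lf \<nu> c 0 t) I" using ndiff_sub[OF opI _ nL] h by blast
    have "\<forall>t\<in>I. Op n F (\<lambda>t. x t - Lf \<nu> c 0 t) t = 0"
      using Op_sub[OF opI _ nL] h OL by simp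
    then obtain \<mu> \<xi> where "\<forall>t\<in>I. x t - Lf \<nu> c 0 t = hom_sol r n a eps \<mu> \<xi> t"
      using part1[of "\<lambda>t. x t - Lf \<nu> c 0 t"] ny \<open>\<forall>t\<in>I. Op n F (\<lambda>t. x t - Lf \<nu> c 0 t) t = 0\<close> by blast
    hence "\<forall>t\<in>I. x t = hom_sol r n a eps \<mu> \<xi> t + \<nu> / 2 * t + c" unfolding Lf_def by auto
    thus "\<exists>\<mu> \<xi>. \<forall>t\<in>I. x t = hom_sol r n a eps \<mu> \<xi> t + \<nu> / 2 * t + c" by blast
  next
    assume "\<exists>\<mu> \<xi>. \<forall>t\<in>I. x t = hom_sol r n a eps \<mu> \<xi> t + \<nu> / 2 * t + c"
    then obtain \<mu> \<xi> where h: "\<forall>t\<in>I. x t = hom_sol r n a eps \<mu> \<xi> t + \<nu> / 2 * t + c" by blast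
    let ?w = "\<lambda>p. if p \<le> r then \<mu> p else \<xi> p"
    let ?f = "\<lambda>k t. Hf ?w k t + Lf \<nu> c k t"
    have ff: "fam I ?f" by (rule fam_add[OF fam_Hf fam_Lf])
    have x: "\<And>t. t \<in> I \<Longrightarrow> x t = ?f 0 t" using h hom_Hf by (simp add: Lf_def)
    have "ndiff_on n x I" by (rule fam_ndiff[OF opI ff x])
    moreover have "Op n F x t = (real n + 1/2) * \<nu> * t + \<beta>" if t: "t \<in> I" for t
    proof -
      have "Op n F x t = OpS n F ?f t" by (rule Op_fam[OF opI ff x t])
      also have "\<dots> = OpS n F (Hf ?w) t + OpS n F (Lf \<nu> c) t" by (rule OpS_add)
      also have "OpS n F (Hf ?w) t = Op n F (Hf ?w 0) t" by (rule Op_fam[OF opI fam_Hf _ t, symmetric]) simp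
      also have "\<dots> = 0" by (rule Op_Hf[OF t]) simp
      also have "OpS n F (Lf \<nu> c) t = (real n + 1/2) * \<nu> * t + \<beta>" unfolding OpS_Lf c_def by simp
      finally show ?thesis by simp
    qed
    ultimately show "ndiff_on n x I \<and> (\<forall>t\<in>I. Op n F x t = (real n + 1/2) * \<nu> * t + \<beta>)" by blast
  qed
qed

end

theorem proposition31:
  fixes r n :: nat and a eps :: "nat \<Rightarrow> real" and I :: "real set"
  assumes "2 \<le> r" and "r \<le> n"
    and "inj_on a ({1} \<union> {r+1..n})"
    and "\<forall>i\<in>{1} \<union> {r+1..n}. eps i = 1 \<or> eps i = -1"
    and "open I" and "is_interval I" and "I \<noteq> {}"
    and "\<forall>t\<in>I. \<forall>i\<in>{1} \<union> {r+1..n}. eps i * (t - a i) > 0"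
  shows "(\<forall>x. (ndiff_on n x I \<and> (\<forall>t\<in>I. Op n (Fpoly r n a) x t = 0))
               \<longleftrightarrow> (\<exists>\<mu> \<xi>. \<forall>t\<in>I. x t = hom_sol r n a eps \<mu> \<xi> t))
       \<and> (\<forall>\<nu> \<beta> :: real. \<exists>c :: real. \<forall>x.
            (ndiff_on n x I \<and> (\<forall>t\<in>I. Op n (Fpoly r n a) x t = (real n + 1/2) * \<nu> * t + \<beta>))
            \<longleftrightarrow> (\<exists>\<mu> \<xi>. \<forall>t\<in>I. x t = hom_sol r n a eps \<mu> \<xi> t + \<nu> / 2 * t + c))"
proof -
  interpret prop_setup r n a eps I using assms by unfold_locales
  show ?thesis using part1 part2 unfolding F_def by blast
qed


end
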